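(* If $s\in[0,1]$, then $U\chi_{[0,s]}(z)=\sqrt{s}\,e^{\frac12\ln s\,\frac{1+z}{1-z}}$ for $z\in\mathbb{D}$.
   Context: $\chi_E$ is the characteristic function of $E\subseteq[0,1]$. $\mathbb{D}$ is the open unit disc, $H^2$ its Hardy space, $k_\alpha(z)=\frac{1}{1-\bar\alpha z}$. The Sarason transform $U$ is the unique unitary operator from $L^2([0,1])$ onto $H^2$ with $U(x^n)=\frac{1}{n+1}k_{\frac{n}{n+1}}$ for all integers $n\ge0$. *)

theory Defs
  imports "HOL-Analysis.Analysis"
begin

text \<open>L^2([0,1]) (complex valued), represented by Borel functions on the real line whose
  values on [0,1] matter.\<close>
definition L2_01 :: "(real \<Rightarrow> complex) set" where
  "L2_01 = {f. f \<in> borel_measurable lborel \<and>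
               set_integrable lborel {0..1} (\<lambda>x. (norm (f x))\<^sup>2)}"

definition L2_inner :: "(real \<Rightarrow> complex) \<Rightarrow> (real \<Rightarrow> complex) \<Rightarrow> complex" where
  "L2_inner f g = (LINT x:{0..1}|lborel. f x * cnj (g x))"

definition taylor_coeff :: "(complex \<Rightarrow> complex) \<Rightarrow> nat \<Rightarrow> complex" where
  "taylor_coeff f n = (deriv ^^ n) f 0 / of_nat (fact n)"

definition H2 :: "(complex \<Rightarrow> complex) set" where
  "H2 = {f. f holomorphic_on ball 0 1 \<and> summable (\<lambda>n. (norm (taylor_coeff f n))\<^sup>2)}"

definition H2_inner :: "(complex \<Rightarrow> complex) \<Rightarrow> (complex \<Rightarrow> complex) \<Rightarrow> complex" where
  "H2_inner f g = (\<Sum>n. taylor_coeff f n * cnj (taylor_coeff g n))"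

definition kernel :: "complex \<Rightarrow> complex \<Rightarrow> complex" where
  "kernel \<alpha> z = 1 / (1 - cnj \<alpha> * z)"

text \<open>U is a unitary operator L^2([0,1]) -> H^2 (functions in H^2 identified
  by their values on the disc) with U(x^n) = 1/(n+1) k_{n/(n+1)}.\<close>
definition sarason_transform :: "((real \<Rightarrow> complex) \<Rightarrow> (complex \<Rightarrow> complex)) \<Rightarrow> bool" where
  "sarason_transform U \<longleftrightarrow>
     (\<forall>f\<in>L2_01. U f \<in> H2) \<and>
     (\<forall>f\<in>L2_01. \<forall>g\<in>L2_01. \<forall>a::complex. \<forall>z\<in>ball 0 1.
         U (\<lambda>x. a * f x + g x) z = a * U f z + U g z) \<and>
     (\<forall>f\<in>L2_01. \<forall>g\<in>L2_01. H2_inner (U f) (U g) = L2_inner f g) \<and>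
     (\<forall>h\<in>H2. \<exists>f\<in>L2_01. \<forall>z\<in>ball 0 1. U f z = h z) \<and>
     (\<forall>n::nat. \<forall>z\<in>ball 0 1.
         U (\<lambda>x. complex_of_real (x ^ n)) z
           = (1 / of_nat (n + 1)) * kernel (of_real (real n / real (n + 1))) z)"

end

theory Submission imports Defs "HOL-Complex_Analysis.Complex_Analysis" begin


lemma mom_poly:
  fixes E :: "real \<Rightarrow> complex"
  assumes E: "integrable lborel E" and E0: "\<And>x. x \<notin> {0..1} \<Longrightarrow> E x = 0"
    and mom: "\<And>n. integral\<^sup>L lborel (\<lambda>x. of_real (x ^ n) * E x) = 0"
    and p: "real_polynomial_function p"
  shows "integral\<^sup>L lborel (\<lambda>x. of_real (p x) * E x) = 0"
proof -
  obtain a n where pa: "p = (\<lambda>x. \<Sum>i\<le>n. a i * x^i)"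
    using p real_polynomial_function_iff_sum by blast
  have Em: "E \<in> borel_measurable lborel" using E by auto
  have int: "integrable lborel (\<lambda>x. of_real (x ^ i) * E x)" for i
  proof (rule Bochner_Integration.integrable_bound[OF integrable_norm[OF E]])
    show "(\<lambda>x. complex_of_real (x ^ i) * E x) \<in> borel_measurable lborel"
      using Em by measurable
    show "AE x in lborel. norm (complex_of_real (x ^ i) * E x) \<le> norm (norm (E x))"
    proof (intro AE_I2)
      fix x show "norm (complex_of_real (x ^ i) * E x) \<le> norm (norm (E x))"
      proof (cases "x \<in> {0..1}")
        case True
        then have "norm (complex_of_real (x ^ i)) \<le> 1" by (simp add: power_le_one norm_power)
        then show ?thesis unfolding norm_mult by (simp add: mult_left_le_one_le del: of_real_power)
      qed (simp add: E0)
    qed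
  qed
  have "(\<lambda>x. of_real (p x) * E x) = (\<lambda>x. \<Sum>i\<le>n. of_real (a i) * (of_real (x ^ i) * E x))"
    by (auto simp: pa sum_distrib_left sum_distrib_right mult_ac)
  then have "integral\<^sup>L lborel (\<lambda>x. of_real (p x) * E x) = (\<Sum>i\<le>n. of_real (a i) * integral\<^sup>L lborel (\<lambda>x. of_real (x ^ i) * E x))"
    using int by (simp add: Bochner_Integration.integral_sum integrable_mult_right)
  also have "\<dots> = 0" using mom by simp
  finally show ?thesis .
qed

lemma mom_cont:
  fixes E :: "real \<Rightarrow> complex"
  assumes E: "integrable lborel E" and E0: "\<And>x. x \<notin> {0..1} \<Longrightarrow> E x = 0"
    and mom: "\<And>n. integral\<^sup>L lborel (\<lambda>x. of_real (x ^ n) * E x) = 0"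
    and phi: "continuous_on UNIV \<phi>"
  shows "integral\<^sup>L lborel (\<lambda>x. of_real (\<phi> x) * E x) = 0"
proof -
  have Em: "E \<in> borel_measurable lborel" using E by auto
  have phim: "\<phi> \<in> borel_measurable lborel"
    using phi by (simp add: borel_measurable_continuous_onI)
  let ?I = "integral\<^sup>L lborel (\<lambda>x. of_real (\<phi> x) * E x)"
  have "norm ?I \<le> e * integral\<^sup>L lborel (\<lambda>x. norm (E x))" if e: "e > 0" for e
  proof -
    obtain p where p: "real_polynomial_function p" and pe: "\<And>x. x \<in> {0..1} \<Longrightarrow> \<bar>\<phi> x - p x\<bar> < e"
      using Stone_Weierstrass_real_polynomial_function[of "{0..1::real}" \<phi> e] e phi
      by (metis compact_Icc continuous_on_subset subset_UNIV)
    have pc: "continuous_on UNIV p"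
      using p continuous_on_polymonial_function real_polynomial_function_eq by blast
    have pm: "p \<in> borel_measurable lborel"
      using pc by (simp add: borel_measurable_continuous_onI)
    have bnd: "norm (of_real (\<phi> x - p x) * E x) \<le> e * norm (E x)" for x
    proof (cases "x \<in> {0..1}")
      case True
      have "norm (complex_of_real (\<phi> x - p x)) \<le> e" using pe[OF True] by (simp only: norm_of_real)
      then show ?thesis unfolding norm_mult
        by (intro mult_right_mono) auto
    qed (simp add: E0)
    have int1: "integrable lborel (\<lambda>x. of_real (\<phi> x - p x) * E x)"
    proof (rule Bochner_Integration.integrable_bound[of _ "\<lambda>x. e * norm (E x)"])
      show "integrable lborel (\<lambda>x. e * norm (E x))" using E by auto
      show "(\<lambda>x. complex_of_real (\<phi> x - p x) * E x) \<in> borel_measurable lborel"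
        using Em phim pm by measurable
      show "AE x in lborel. norm (complex_of_real (\<phi> x - p x) * E x) \<le> norm (e * norm (E x))"
        using bnd e by (intro AE_I2) (auto intro: order_trans)
    qed
    have int2: "integrable lborel (\<lambda>x. of_real (p x) * E x)"
    proof -
      obtain a n where pa: "p = (\<lambda>x. \<Sum>i\<le>n. a i * x^i)"
        using p real_polynomial_function_iff_sum by blast
      have "continuous_on {0..1} p" using pc continuous_on_subset by blast
      then obtain B where B: "\<And>x. x \<in> {0..1} \<Longrightarrow> norm (p x) \<le> B"
        using compact_Icc compact_imp_bounded[OF compact_continuous_image] 
        by (metis bounded_iff imageI)
      show ?thesis
      proof (rule Bochner_Integration.integrable_bound[of _ "\<lambda>x. B * norm (E x)"])
        show "integrable lborel (\<lambda>x. B * norm (E x))" using E by auto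
        show "(\<lambda>x. complex_of_real (p x) * E x) \<in> borel_measurable lborel"
          using Em pm by measurable
        show "AE x in lborel. norm (complex_of_real (p x) * E x) \<le> norm (B * norm (E x))"
        proof (intro AE_I2)
          fix x show "norm (complex_of_real (p x) * E x) \<le> norm (B * norm (E x))"
          proof (cases "x \<in> {0..1}")
            case True
            then show ?thesis using B[OF True] unfolding norm_mult
              by (auto intro!: mult_right_mono simp: abs_mult)
          qed (simp add: E0)
        qed
      qed
    qed
    have "?I = integral\<^sup>L lborel (\<lambda>x. of_real (\<phi> x - p x) * E x + of_real (p x) * E x)"
      by (simp add: algebra_simps)
    also have "\<dots> = integral\<^sup>L lborel (\<lambda>x. of_real (\<phi> x - p x) * E x)"
      using int1 int2 mom_poly[OF E E0 mom p] by simp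
    finally have "norm ?I = norm (integral\<^sup>L lborel (\<lambda>x. of_real (\<phi> x - p x) * E x))" by simp
    also have "\<dots> \<le> integral\<^sup>L lborel (\<lambda>x. e * norm (E x))"
      using int1 E bnd by (intro order_trans[OF integral_norm_bound] integral_mono) auto
    also have "\<dots> = e * integral\<^sup>L lborel (\<lambda>x. norm (E x))" by simp
    finally show ?thesis .
  qed
  then have "norm ?I \<le> 0"
  proof -
    assume H: "\<And>e. e > 0 \<Longrightarrow> norm ?I \<le> e * integral\<^sup>L lborel (\<lambda>x. norm (E x))"
    let ?N = "integral\<^sup>L lborel (\<lambda>x. norm (E x))"
    show ?thesis
    proof (rule field_le_epsilon)
      fix d :: real assume d: "d > 0"
      have N0: "?N \<ge> 0" by (simp add: integral_nonneg_AE)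
      have "norm ?I \<le> (d / (?N + 1)) * ?N" using H[of "d / (?N + 1)"] d N0
        by (simp add: add_nonneg_pos)
      also have "\<dots> \<le> (d / (?N + 1)) * (?N + 1)" using d N0 by (intro mult_left_mono) auto
      also have "\<dots> = d" proof - have "?N + 1 \<noteq> 0" using N0 by linarith then show ?thesis by simp qed
      finally show "norm ?I \<le> 0 + d" by simp
    qed
  qed
  then show ?thesis by simp
qed

lemma mom_ind:
  fixes E :: "real \<Rightarrow> complex"
  assumes E: "integrable lborel E" and E0: "\<And>x. x \<notin> {0..1} \<Longrightarrow> E x = 0"
    and mom: "\<And>n. integral\<^sup>L lborel (\<lambda>x. of_real (x ^ n) * E x) = 0"
  shows "integral\<^sup>L lborel (\<lambda>x. indicator {..s} x * E x) = 0"
proof -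
  define \<phi> where "\<phi> k x = min 1 (max 0 (1 - real (Suc k) * (x - s)))" for k and x :: real
  have Em: "E \<in> borel_measurable lborel" using E by auto
  have cont: "continuous_on UNIV (\<phi> k)" for k
    unfolding \<phi>_def by (intro continuous_intros)
  have phim: "\<phi> k \<in> borel_measurable lborel" for k
    using cont by (simp add: borel_measurable_continuous_onI)
  have lim: "(\<lambda>k. of_real (\<phi> k x) * E x) \<longlonglongrightarrow> indicator {..s} x * E x" for x
  proof (cases "x \<le> s")
    case True
    have "\<phi> k x = 1" for k 
    proof -
      have "real (Suc k) * (x - s) \<le> 0" using True by (intro mult_nonneg_nonpos) auto
      then show ?thesis unfolding \<phi>_def by (auto simp del: of_nat_Suc)
    qed
    then show ?thesis using True by simp
  next
    case False
    obtain N :: nat where N: "real N > 1 / (x - s)" using reals_Archimedean2 by blast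
    have "\<phi> k x = 0" if "k \<ge> N" for k
    proof -
      have "real (Suc k) * (x - s) \<ge> real N * (x - s)" using that False
        by (intro mult_right_mono) auto
      moreover have "real N * (x - s) > 1" using N False by (simp add: field_simps)
      ultimately show ?thesis unfolding \<phi>_def by (simp add: min_def max_def)
    qed
    then have "eventually (\<lambda>k. of_real (\<phi> k x) * E x = 0) sequentially"
      by (auto simp: eventually_sequentially)
    then have "(\<lambda>k. of_real (\<phi> k x) * E x) \<longlonglongrightarrow> 0"
      by (rule tendsto_eventually)
    then show ?thesis using False by simp
  qed
  have "(\<lambda>k. integral\<^sup>L lborel (\<lambda>x. of_real (\<phi> k x) * E x)) \<longlonglongrightarrow> integral\<^sup>L lborel (\<lambda>x. indicator {..s} x * E x)"
  proof (rule integral_dominated_convergence[where w = "\<lambda>x. norm (E x)"])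
    show "(\<lambda>x. indicator {..s} x * E x) \<in> borel_measurable lborel" using Em by measurable
    show "(\<lambda>x. complex_of_real (\<phi> k x) * E x) \<in> borel_measurable lborel" for k
      using Em phim by measurable
    show "integrable lborel (\<lambda>x. norm (E x))" using E by auto
    show "AE x in lborel. (\<lambda>k. complex_of_real (\<phi> k x) * E x) \<longlonglongrightarrow> indicator {..s} x * E x"
      by (intro AE_I2 lim)
    show "AE x in lborel. norm (complex_of_real (\<phi> k x) * E x) \<le> norm (E x)" for k
    proof (intro AE_I2)
      fix x
      have "\<bar>\<phi> k x\<bar> \<le> 1" unfolding \<phi>_def by (auto simp: min_def max_def)
      then show "norm (complex_of_real (\<phi> k x) * E x) \<le> norm (E x)"
        unfolding norm_mult by (simp add: mult_left_le_one_le)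
    qed
  qed
  moreover have "integral\<^sup>L lborel (\<lambda>x. of_real (\<phi> k x) * E x) = 0" for k
    by (rule mom_cont[OF E E0 mom cont])
  ultimately have "(\<lambda>k. 0) \<longlonglongrightarrow> integral\<^sup>L lborel (\<lambda>x. indicator {..s} x * E x)"
    by simp
  then show ?thesis using LIMSEQ_unique[OF _ tendsto_const] by metis
qed



lemma powr_hasint:
  fixes b :: complex and t :: real
  assumes b: "Re b > 0" and t: "t \<ge> 0"
  shows "((\<lambda>x. complex_of_real x powr (b - 1)) has_integral (of_real t powr b / b)) {0..t}"
proof -
  have "((\<lambda>x. complex_of_real x powr (b - 1)) has_integral
            (of_real t powr b / b - of_real 0 powr b / b)) {0..t}" using b t
    by (intro fundamental_theorem_of_calculus_interior)
       (auto intro!: continuous_intros derivative_eq_intros has_vector_derivative_real_field)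
  thus ?thesis by simp
qed

lemma powr_meas:
  fixes c :: complex
  shows "(\<lambda>x. indicator {0..t} x *\<^sub>R complex_of_real x powr c) \<in> borel_measurable borel"
proof -
  have "(\<lambda>x. if x \<in> {0<..t} then complex_of_real x powr c else 0) \<in> borel_measurable borel"
    by (intro borel_measurable_continuous_on_if) (auto intro!: continuous_intros)
  moreover have "(\<lambda>x. indicator {0..t} x *\<^sub>R complex_of_real x powr c) = (\<lambda>x. if x \<in> {0<..t} then complex_of_real x powr c else 0)"
    by (auto simp: indicator_def fun_eq_iff)
  ultimately show ?thesis by simp
qed

lemma powr_lborel:
  fixes b :: complex and t :: real
  assumes b: "Re b > 0" and t: "t \<ge> 0"
  shows "set_integrable lborel {0..t} (\<lambda>x. complex_of_real x powr (b - 1))"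
    "(LINT x:{0..t}|lborel. complex_of_real x powr (b - 1)) = of_real t powr b / b"
proof -
  have hi: "((\<lambda>x. complex_of_real x powr (b - 1)) has_integral (of_real t powr b / b)) {0..t}"
    by (rule powr_hasint[OF b t])
  have ai: "(\<lambda>x. complex_of_real x powr (b - 1)) absolutely_integrable_on {0..t}"
  proof (rule absolutely_integrable_integrable_bound[where g = "\<lambda>x. x powr (Re b - 1)"])
    show "norm (complex_of_real x powr (b - 1)) \<le> x powr (Re b - 1)" if "x \<in> {0..t}" for x
      using that by (subst norm_powr_real_powr) auto
    show "(\<lambda>x. complex_of_real x powr (b - 1)) integrable_on {0..t}" using hi by blast
    show "(\<lambda>x. x powr (Re b - 1)) integrable_on {0..t}"
      using b t by (intro integrable_on_powr_from_0) auto
  qed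
  show si: "set_integrable lborel {0..t} (\<lambda>x. complex_of_real x powr (b - 1))"
    using ai powr_meas[of t "b - 1"] unfolding set_integrable_def
    by (subst integrable_completion[symmetric]) auto
  show "(LINT x:{0..t}|lborel. complex_of_real x powr (b - 1)) = of_real t powr b / b"
    using set_borel_integral_eq_integral(2)[OF si] hi by (simp add: integral_unique)
qed



lemma norm_prod_lt1:
  fixes c w :: complex
  assumes "norm c < 1" "norm w < 1"
  shows "norm (cnj c * w) < 1"
proof -
  have "norm c * norm w \<le> norm c" using assms
    by (intro mult_right_le_one_le) auto
  then show ?thesis using assms by (simp add: norm_mult)
qed

lemma kernel_fps:
  assumes c: "norm c < 1"
  shows "kernel c has_fps_expansion Abs_fps (\<lambda>n. cnj c ^ n)"
  unfolding has_fps_expansion_def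
proof
  have "summable (\<lambda>n. cnj c ^ n * 1 ^ n)" using c by (simp add: summable_geometric)
  then have "conv_radius (\<lambda>n. cnj c ^ n) \<ge> norm (1::complex)" by (rule conv_radius_geI)
  then have "ereal 1 \<le> conv_radius (\<lambda>n. cnj c ^ n)" by simp
  moreover have "(0::ereal) < ereal 1" by simp
  ultimately have "0 < conv_radius (\<lambda>n. cnj c ^ n)" by (rule order.strict_trans2[rotated])
  then show "0 < fps_conv_radius (Abs_fps (\<lambda>n. cnj c ^ n))"
    unfolding fps_conv_radius_def by simp
  have "eval_fps (Abs_fps (\<lambda>n. cnj c ^ n)) w = kernel c w" if w: "w \<in> ball 0 1" for w
  proof -
    have "norm (cnj c * w) < 1" using w c by (intro norm_prod_lt1) auto
    then have "(\<lambda>n. (cnj c * w) ^ n) sums (1 / (1 - cnj c * w))" by (rule geometric_sums)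
    then show ?thesis unfolding eval_fps_def kernel_def
      by (simp add: sums_iff power_mult_distrib)
  qed
  then show "\<forall>\<^sub>F z in nhds 0. eval_fps (Abs_fps (\<lambda>n. cnj c ^ n)) z = kernel c z"
  proof -
    have "eventually (\<lambda>w. w \<in> ball 0 1) (nhds (0::complex))" by (intro eventually_nhds_in_open) auto
    then show ?thesis by (rule eventually_mono) (use \<open>\<And>w. w \<in> ball 0 1 \<Longrightarrow> _\<close> in blast)
  qed
qed

lemma taylor_kernel:
  assumes c: "norm c < 1"
  shows "taylor_coeff (kernel c) n = cnj c ^ n"
  using fps_nth_fps_expansion[OF kernel_fps[OF c], of n] unfolding taylor_coeff_def
  by simp

lemma kernel_H2:
  assumes c: "norm c < 1"
  shows "kernel c \<in> H2"
  unfolding H2_def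
proof safe
  show "kernel c holomorphic_on ball 0 1"
    unfolding kernel_def
  proof (intro holomorphic_intros)
    fix w :: complex assume "w \<in> ball 0 1"
    then have "norm (cnj c * w) < 1" using c by (intro norm_prod_lt1) auto
    then show "1 - cnj c * w \<noteq> 0" by auto
  qed
  have "summable (\<lambda>n. (norm c ^ 2) ^ n)"
    using c by (intro summable_geometric) (simp add: power_less_one_iff abs_square_less_1)
  then show "summable (\<lambda>n. (norm (taylor_coeff (kernel c) n))\<^sup>2)"
  proof -
    have "(norm (taylor_coeff (kernel c) n))\<^sup>2 = (norm c ^ 2) ^ n" for n
      by (simp add: taylor_kernel[OF c] norm_power flip: power_mult) (simp add: mult.commute)
    then show ?thesis using \<open>summable (\<lambda>n. (norm c ^ 2) ^ n)\<close> by simp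
  qed
qed

lemma taylor_cong:
  assumes "\<And>w. w \<in> ball 0 1 \<Longrightarrow> f w = g w"
  shows "taylor_coeff f n = taylor_coeff g n"
proof -
  have "eventually (\<lambda>w. f w = g w) (nhds 0)"
  proof -
    have "eventually (\<lambda>w. w \<in> ball 0 1) (nhds (0::complex))" by (intro eventually_nhds_in_open) auto
    then show ?thesis by (rule eventually_mono) (use assms in blast)
  qed
  then show ?thesis unfolding taylor_coeff_def
    by (simp add: higher_deriv_cong_ev[of f g 0 0 n])
qed

lemma reproduce:
  assumes h: "h \<in> H2" and z: "z \<in> ball 0 1"
    and k: "\<And>w. w \<in> ball 0 1 \<Longrightarrow> k w = kernel z w"
  shows "H2_inner h k = h z"
proof -
  have hol: "h holomorphic_on ball 0 1" using h by (simp add: H2_def)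
  have S: "(\<lambda>n. (deriv ^^ n) h 0 / fact n * (z - 0) ^ n) sums h z"
    using holomorphic_power_series[OF hol z] .
  have z1: "norm z < 1" using z by simp
  have eq: "taylor_coeff h n * cnj (taylor_coeff k n) = (deriv ^^ n) h 0 / fact n * (z - 0) ^ n" for n
  proof -
    have "taylor_coeff k n = taylor_coeff (kernel z) n" by (rule taylor_cong) (rule k)
    also have "\<dots> = cnj z ^ n" by (rule taylor_kernel[OF z1])
    finally have "cnj (taylor_coeff k n) = z ^ n" by simp
    then show ?thesis unfolding taylor_coeff_def by simp
  qed
  have "(\<lambda>n. taylor_coeff h n * cnj (taylor_coeff k n)) sums h z"
    unfolding eq by (rule S)
  then show ?thesis unfolding H2_inner_def by (rule sums_unique[symmetric])
qed


lemma cpowr_add: "(x::complex) \<noteq> 0 \<Longrightarrow> x powr (a + b) = x powr a * x powr b"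
  by (simp add: powr_def distrib_right exp_add)

lemma L2_monomial: "(\<lambda>x. complex_of_real (x ^ n)) \<in> L2_01"
  unfolding L2_01_def
proof safe
  show "(\<lambda>x. complex_of_real (x ^ n)) \<in> borel_measurable lborel"
    by measurable
  show "set_integrable lborel {0..1} (\<lambda>x. (norm (complex_of_real (x ^ n)))\<^sup>2)"
    unfolding set_integrable_def
    by (intro borel_integrable_compact) (auto intro!: continuous_intros)
qed

lemma L2_indicator: "(indicator {0..s} :: real \<Rightarrow> complex) \<in> L2_01"
  unfolding L2_01_def
proof safe
  show "(indicator {0..s} :: real \<Rightarrow> complex) \<in> borel_measurable lborel"
    by simp
  have "(\<lambda>x. indicator {0..1} x *\<^sub>R (norm (indicator {0..s} x :: complex))\<^sup>2) = indicator ({0..1} \<inter> {0..s})"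
    by (auto simp: fun_eq_iff indicator_def)
  moreover have "integrable lborel (indicator ({0..1} \<inter> {0..s}) :: real \<Rightarrow> real)"
    by (intro integrable_real_indicator) (auto simp: emeasure_lborel_Icc_eq intro: le_less_trans[OF emeasure_mono[of _ "{0..1}"]])
  ultimately show "set_integrable lborel {0..1} (\<lambda>x. (norm (indicator {0..s} x :: complex))\<^sup>2)"
    unfolding set_integrable_def by simp
qed

lemma L2_set_integrable:
  assumes g: "g \<in> L2_01"
  shows "set_integrable lborel {0..1} (\<lambda>x. cnj (g x))"
proof -
  have gm: "g \<in> borel_measurable lborel" and g2: "set_integrable lborel {0..1} (\<lambda>x. (norm (g x))\<^sup>2)"
    using g by (auto simp: L2_01_def)
  have "set_integrable lborel {0..1} (\<lambda>x. 1 + (norm (g x))\<^sup>2)"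
    using g2 by (intro set_integral_add) (auto simp: set_integrable_def intro!: borel_integrable_compact)
  then show ?thesis
  proof (rule set_integrable_bound)
    show "set_borel_measurable lborel {0..1} (\<lambda>x. cnj (g x))"
    proof -
      have gm': "g \<in> borel_measurable borel" using gm by simp
      have cm: "cnj \<in> borel_measurable borel"
        by (intro borel_measurable_continuous_onI continuous_intros)
      have cg: "(\<lambda>x. cnj (g x)) \<in> borel_measurable borel"
        using measurable_compose[OF gm' cm] by (simp add: comp_def)
      show ?thesis unfolding set_borel_measurable_def
        using cg by simp

    qed
    show "AE x in lborel. x \<in> {0..1} \<longrightarrow> norm (cnj (g x)) \<le> norm (1 + (norm (g x))\<^sup>2)"
    proof (intro AE_I2 impI)
      fix x
      have "norm (g x) \<le> 1 + (norm (g x))\<^sup>2"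
      proof -
        have "0 \<le> (norm (g x) - 1)\<^sup>2" by simp
        then have "2 * norm (g x) \<le> 1 + (norm (g x))\<^sup>2" by (simp add: power2_eq_square algebra_simps)
        moreover have "0 \<le> norm (g x)" by simp
        ultimately show ?thesis by linarith
      qed
      then show "norm (cnj (g x)) \<le> norm (1 + (norm (g x))\<^sup>2)" by simp
    qed
  qed
qed

lemma setint_monomial:
  assumes f: "set_integrable lborel {0..1} f"
  shows "set_integrable lborel {0..1} (\<lambda>x. complex_of_real (x ^ n) * f x)"
proof (rule set_integrable_bound[OF f])
  have fm: "(\<lambda>x. indicator {0..1} x *\<^sub>R f x) \<in> borel_measurable lborel"
    using f unfolding set_integrable_def by (rule borel_measurable_integrable)
  have "(\<lambda>x. complex_of_real (x ^ n) * (indicator {0..1} x *\<^sub>R f x)) \<in> borel_measurable lborel"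
    using fm by measurable
  moreover have "(\<lambda>x. indicator {0..1} x *\<^sub>R (complex_of_real (x ^ n) * f x)) = (\<lambda>x. complex_of_real (x ^ n) * (indicator {0..1} x *\<^sub>R f x))"
    by (auto simp: fun_eq_iff)
  ultimately show "set_borel_measurable lborel {0..1} (\<lambda>x. complex_of_real (x ^ n) * f x)"
    unfolding set_borel_measurable_def by simp
  show "AE x in lborel. x \<in> {0..1} \<longrightarrow> norm (complex_of_real (x ^ n) * f x) \<le> norm (f x)"
  proof (intro AE_I2 impI)
    fix x :: real assume "x \<in> {0..1}"
    then have "norm (complex_of_real (x ^ n)) \<le> 1" by (simp add: power_le_one norm_power)
    then show "norm (complex_of_real (x ^ n) * f x) \<le> norm (f x)" unfolding norm_mult
      by (simp add: mult_left_le_one_le del: of_real_power)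
  qed
qed

theorem lemma2p5:
  fixes U :: "(real \<Rightarrow> complex) \<Rightarrow> (complex \<Rightarrow> complex)"
    and s :: real and z :: complex
  assumes "sarason_transform U"
    and "s \<in> {0..1}"
    and "z \<in> ball 0 1"
  shows "U (indicator {0..s}) z
           = complex_of_real (sqrt s) * exp (complex_of_real (ln s / 2) * ((1 + z) / (1 - z)))"
proof -
  note ST = assms(1)[unfolded sarason_transform_def]
  have UH2: "\<And>f. f \<in> L2_01 \<Longrightarrow> U f \<in> H2" using ST by blast
  have iso: "\<And>f g. f \<in> L2_01 \<Longrightarrow> g \<in> L2_01 \<Longrightarrow> H2_inner (U f) (U g) = L2_inner f g" using ST by blast
  have surj: "\<And>h. h \<in> H2 \<Longrightarrow> \<exists>f\<in>L2_01. \<forall>z\<in>ball 0 1. U f z = h z" using ST by blast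
  have mon: "\<And>n. U (\<lambda>x. complex_of_real (x ^ n)) z
           = (1 / of_nat (n + 1)) * kernel (of_real (real n / real (n + 1))) z" using ST assms(3) by blast
  have s: "0 \<le> s" "s \<le> 1" using assms(2) by auto
  have z1: "norm z < 1" using assms(3) by simp
  have z1': "z \<noteq> 1" using z1 by auto
  define a where "a = 1 / (1 - z)"
  have Rea: "Re a > 0"
  proof -
    have "Re (1 - z) > 0" using z1 complex_Re_le_cmod[of z] by simp
    then have "Re z < 1" by simp
    then show ?thesis unfolding a_def
      by (simp add: Re_divide) (intro divide_pos_pos add_pos_nonneg, auto)
  qed
  have a0: "a \<noteq> 0" using Rea by auto
  obtain g where g: "g \<in> L2_01" and Ug: "\<And>w. w \<in> ball 0 1 \<Longrightarrow> U g w = kernel z w"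
    using surj[OF kernel_H2[OF z1]] by blast
  have rep: "U f z = L2_inner f g" if f: "f \<in> L2_01" for f
  proof -
    have "U f z = H2_inner (U f) (U g)"
      by (rule reproduce[symmetric, OF UH2[OF f] assms(3) Ug])
    also have "\<dots> = L2_inner f g" by (rule iso[OF f g])
    finally show ?thesis .
  qed
  define W where "W x = a * complex_of_real x powr (a - 1)" for x
  have Wint: "set_integrable lborel {0..1} W"
    unfolding W_def using powr_lborel(1)[OF Rea, of 1] by (simp add: set_integrable_mult_right)
  have Gint: "set_integrable lborel {0..1} (\<lambda>x. cnj (g x))" by (rule L2_set_integrable[OF g])
  have den: "of_nat n * (1 - z) + 1 \<noteq> 0" for n
  proof -
    have "Re z < 1" using z1 complex_Re_le_cmod[of z] by simp
    then have "Re (of_nat n * (1 - z) + 1) > 0" by (simp add: add_nonneg_pos)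
    then show ?thesis by (metis less_irrefl zero_complex.sel(1))
  qed
  have mom_g: "(LINT x:{0..1}|lborel. complex_of_real (x ^ n) * cnj (g x)) = a / (of_nat n + a)" for n
  proof -
    have "(LINT x:{0..1}|lborel. complex_of_real (x ^ n) * cnj (g x)) = U (\<lambda>x. complex_of_real (x ^ n)) z"
      using rep[OF L2_monomial] by (simp add: L2_inner_def)
    also have "\<dots> = (1 / of_nat (n + 1)) * kernel (of_real (real n / real (n + 1))) z" by (rule mon)
    also have "\<dots> = 1 / (of_nat n * (1 - z) + 1)"
    proof -
      have np: "(1 + complex_of_nat n) \<noteq> 0" "(complex_of_nat n + 1) \<noteq> 0"
        using of_nat_neq_0[of n, where 'a=complex] by (simp_all add: add.commute)
      show ?thesis
        unfolding kernel_def using den[of n] np by (simp add: field_simps)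
    qed
    also have "\<dots> = a / (of_nat n + a)"
      unfolding a_def using den[of n] z1' by (simp add: field_simps)
    finally show ?thesis .
  qed
  have Wn: "complex_of_real (x ^ n) * W x = a * complex_of_real x powr ((of_nat n + a) - 1)" if "x \<ge> 0" for x n
  proof (cases "x = 0")
    case True then show ?thesis by (simp add: W_def)
  next
    case False
    then have "complex_of_real x \<noteq> 0" by simp
    have "complex_of_real x powr ((of_nat n + a) - 1) = complex_of_real x powr (of_nat n + (a - 1))"
      by (simp add: algebra_simps)
    also have "\<dots> = complex_of_real x powr of_nat n * complex_of_real x powr (a - 1)"
      by (rule cpowr_add) (use \<open>complex_of_real x \<noteq> 0\<close> in simp)
    also have "complex_of_real x powr of_nat n = complex_of_real (x ^ n)"
      using \<open>complex_of_real x \<noteq> 0\<close> by (simp add: powr_nat')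
    finally show ?thesis unfolding W_def by (simp add: algebra_simps)
  qed
  have mom_W: "(LINT x:{0..1}|lborel. complex_of_real (x ^ n) * W x) = a / (of_nat n + a)" for n
  proof -
    have Ren: "Re (of_nat n + a) > 0" using Rea by simp
    have "(LINT x:{0..1}|lborel. complex_of_real (x ^ n) * W x) = (LINT x:{0..1}|lborel. a * complex_of_real x powr ((of_nat n + a) - 1))"
      using Wn by (intro set_lebesgue_integral_cong) auto
    also have "\<dots> = a * (LINT x:{0..1}|lborel. complex_of_real x powr ((of_nat n + a) - 1))"
      by (simp add: set_integral_mult_right)
    also have "\<dots> = a / (of_nat n + a)"
      using powr_lborel(2)[OF Ren, of 1] by simp
    finally show ?thesis .
  qed
  define E where "E x = indicator {0..1} x *\<^sub>R (cnj (g x) - W x)" for x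
  have Eint: "integrable lborel E"
    using set_integral_diff(1)[OF Gint Wint] unfolding E_def set_integrable_def .
  have E0: "\<And>x. x \<notin> {0..1} \<Longrightarrow> E x = 0" by (simp add: E_def)
  have Emom: "integral\<^sup>L lborel (\<lambda>x. of_real (x ^ n) * E x) = 0" for n
  proof -
    have "integral\<^sup>L lborel (\<lambda>x. of_real (x ^ n) * E x) = 
       (LINT x:{0..1}|lborel. complex_of_real (x ^ n) * cnj (g x) - complex_of_real (x ^ n) * W x)"
      unfolding set_lebesgue_integral_def E_def
      by (intro Bochner_Integration.integral_cong) (auto simp: algebra_simps)
    also have "\<dots> = (LINT x:{0..1}|lborel. complex_of_real (x ^ n) * cnj (g x)) - (LINT x:{0..1}|lborel. complex_of_real (x ^ n) * W x)"
      by (intro set_integral_diff(2) setint_monomial Gint Wint)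
    also have "\<dots> = 0" using mom_g mom_W by simp
    finally show ?thesis .
  qed
  have "integral\<^sup>L lborel (\<lambda>x. indicator {..s} x * E x) = 0"
    by (rule mom_ind[OF Eint E0 Emom])
  moreover have "integral\<^sup>L lborel (\<lambda>x. indicator {..s} x * E x) = (LINT x:{0..s}|lborel. cnj (g x) - W x)"
    unfolding set_lebesgue_integral_def E_def using s
    by (intro Bochner_Integration.integral_cong) (auto simp: indicator_def)
  moreover have "(LINT x:{0..s}|lborel. cnj (g x) - W x) = (LINT x:{0..s}|lborel. cnj (g x)) - (LINT x:{0..s}|lborel. W x)"
    using s by (intro set_integral_diff(2) set_integrable_subset[OF Gint] set_integrable_subset[OF Wint]) auto
  ultimately have key: "(LINT x:{0..s}|lborel. cnj (g x)) = (LINT x:{0..s}|lborel. W x)"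
    by simp
  have "U (indicator {0..s}) z = L2_inner (indicator {0..s}) g"
    by (rule rep[OF L2_indicator])
  also have "\<dots> = (LINT x:{0..s}|lborel. cnj (g x))"
    unfolding L2_inner_def set_lebesgue_integral_def using s
    by (intro Bochner_Integration.integral_cong) (auto simp: indicator_def)
  also have "\<dots> = (LINT x:{0..s}|lborel. W x)" by (rule key)
  also have "\<dots> = complex_of_real s powr a"
    unfolding W_def using powr_lborel(2)[OF Rea s(1)] a0 by (simp add: set_integral_mult_right)
  also have "\<dots> = complex_of_real (sqrt s) * exp (complex_of_real (ln s / 2) * ((1 + z) / (1 - z)))"
  proof (cases "s = 0")
    case True then show ?thesis by simp
  next
    case False
    then have sp: "s > 0" using s by simp
    have sq: "sqrt s = exp (ln s / 2)"
      using sp powr_half_sqrt[of s] by (simp add: powr_def)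
    have "complex_of_real s powr a = exp (a * complex_of_real (ln s))"
      using sp by (simp add: powr_def Ln_of_real mult.commute)
    also have "a * complex_of_real (ln s) = complex_of_real (ln s / 2) + complex_of_real (ln s / 2) * ((1 + z) / (1 - z))"
      unfolding a_def using z1' by (simp add: field_simps)
    also have "exp \<dots> = complex_of_real (sqrt s) * exp (complex_of_real (ln s / 2) * ((1 + z) / (1 - z)))"
    proof -
      have "complex_of_real (exp (ln s / 2)) = exp (complex_of_real (ln s / 2))" by (rule exp_of_real[symmetric])
      then show ?thesis unfolding sq exp_add by simp
    qed
    finally show ?thesis .
  qed
  finally show ?thesis .
qed

end
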